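(* The group $\operatorname{IET}^{\bowtie}$ is generated by the images of flips.
   Context: $X=[0,1[$. $\widehat{\operatorname{IET}^{\bowtie}}$ is the group of bijections $f:X\to X$ for which there is a finite partition of $X$ into intervals $[a,b[$ such that on each open interval $]a,b[$, $f$ is of the form $x\mapsto x+c$ or $x\mapsto -x+c$. ${\mathfrak S}_{\mathrm{fin}}$ is its normal subgroup of finitely supported permutations and $\operatorname{IET}^{\bowtie}=\widehat{\operatorname{IET}^{\bowtie}}/{\mathfrak S}_{\mathrm{fin}}$. For a nonempty interval $I=[a,b[\subseteq X$, the $I$-flip is the bijection of $X$ mapping $x\mapsto a+b-x$ on $]a,b[$ and fixing every other point; a flip is an $I$-flip for some such $I$, and "images of flips" means their images in $\operatorname{IET}^{\bowtie}$. *)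

theory Defs
  imports "HOL-Algebra.Algebra"
begin

definition IX :: "real set" where "IX = {0..<1}"

definition piecewise_isom :: "(real \<Rightarrow> real) \<Rightarrow> bool" where
  "piecewise_isom f \<longleftrightarrow> (\<exists>P :: (real \<times> real) set. finite P \<and>
      (\<forall>(a,b)\<in>P. a < b) \<and>
      (\<Union>(a,b)\<in>P. {a..<b}) = IX \<and>
      (\<forall>p\<in>P. \<forall>q\<in>P. p \<noteq> q \<longrightarrow> {fst p..<snd p} \<inter> {fst q..<snd q} = {}) \<and>
      (\<forall>(a,b)\<in>P. \<exists>c. (\<forall>x\<in>{a<..<b}. f x = x + c) \<or> (\<forall>x\<in>{a<..<b}. f x = - x + c)))"

definition IETh_carrier :: "(real \<Rightarrow> real) set" where
  "IETh_carrier = {f. bij_betw f IX IX \<and> (\<forall>x. x \<notin> IX \<longrightarrow> f x = x) \<and> piecewise_isom f}"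

definition IETh :: "(real \<Rightarrow> real) monoid" where
  "IETh = \<lparr>carrier = IETh_carrier, monoid.mult = (\<lambda>f g. f \<circ> g), one = id\<rparr>"

definition Sfin :: "(real \<Rightarrow> real) set" where
  "Sfin = {f \<in> IETh_carrier. finite {x. f x \<noteq> x}}"

definition IET :: "(real \<Rightarrow> real) set monoid" where
  "IET = IETh Mod Sfin"

definition flip :: "real \<Rightarrow> real \<Rightarrow> real \<Rightarrow> real" where
  "flip a b x = (if a < x \<and> x < b then a + b - x else x)"

definition flips :: "(real \<Rightarrow> real) set" where
  "flips = {flip a b | a b. 0 \<le> a \<and> a < b \<and> b \<le> 1}"

end

theory Submission
  imports Defs
begin

definition aff :: "(real \<Rightarrow> real) \<Rightarrow> real \<Rightarrow> real \<Rightarrow> bool" where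
  "aff f u v \<longleftrightarrow> (\<exists>c. (\<forall>x\<in>{u<..<v}. f x = x + c) \<or> (\<forall>x\<in>{u<..<v}. f x = - x + c))"

definition BP :: "(real \<Rightarrow> real) \<Rightarrow> real set \<Rightarrow> bool" where
  "BP f B \<longleftrightarrow> finite B \<and> (\<forall>u v. 0 \<le> u \<longrightarrow> u < v \<longrightarrow> v \<le> 1 \<longrightarrow> {u<..<v} \<inter> B = {} \<longrightarrow> aff f u v)"

lemma aff_mono: "aff f u v \<Longrightarrow> u \<le> u' \<Longrightarrow> v' \<le> v \<Longrightarrow> aff f u' v'"
  unfolding aff_def by (meson greaterThanLessThan_iff less_le_trans le_less_trans)

lemma PI_BP:
  assumes "piecewise_isom f" shows "\<exists>B. BP f B"
proof -
  obtain P :: "(real \<times> real) set" where fin: "finite P" and lt: "\<forall>(a,b)\<in>P. a < b"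
    and un: "(\<Union>(a,b)\<in>P. {a..<b}) = IX"
    and af: "\<forall>(a,b)\<in>P. \<exists>c. (\<forall>x\<in>{a<..<b}. f x = x + c) \<or> (\<forall>x\<in>{a<..<b}. f x = - x + c)"
    using assms unfolding piecewise_isom_def by blast
  define B where "B = fst ` P \<union> snd ` P"
  have "BP f B"
    unfolding BP_def
  proof (intro conjI allI impI)
    show "finite B" using fin B_def by auto
    fix u v :: real
    assume h: "0 \<le> u" "u < v" "v \<le> 1" "{u<..<v} \<inter> B = {}"
    define m where "m = (u + v) / 2"
    have "m \<in> IX" using h unfolding m_def IX_def by auto
    then obtain a b where ab: "(a,b) \<in> P" "m \<in> {a..<b}" using un by blast
    have "a \<in> B" "b \<in> B" using ab unfolding B_def by force+
    have "a \<notin> {u<..<v}" "b \<notin> {u<..<v}" using h(4) \<open>a \<in> B\<close> \<open>b \<in> B\<close> by blast+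
    moreover have "a \<le> m" "m < b" using ab by auto
    ultimately have "a \<le> u" "v \<le> b" using h unfolding m_def by auto
    moreover have "aff f a b" using af ab unfolding aff_def by auto
    ultimately show "aff f u v" using aff_mono by blast
  qed
  thus ?thesis by blast
qed

lemma BP_PI:
  assumes "BP f B" shows "piecewise_isom f"
proof -
  have finB: "finite B" and bp: "\<And>u v. 0 \<le> u \<Longrightarrow> u < v \<Longrightarrow> v \<le> 1 \<Longrightarrow> {u<..<v} \<inter> B = {} \<Longrightarrow> aff f u v"
    using assms unfolding BP_def by auto
  define B' where "B' = insert 0 (insert 1 (B \<inter> {0..1}))"
  have finB': "finite B'" using finB B'_def by auto
  have B'01: "B' \<subseteq> {0..1}" unfolding B'_def by auto
  define P where "P = {(a,b). a \<in> B' \<and> b \<in> B' \<and> a < b \<and> {a<..<b} \<inter> B' = {}}"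
  have "finite P"
    by (rule finite_subset[of _ "B' \<times> B'"]) (auto simp: P_def finB')
  moreover have "\<forall>(a,b)\<in>P. a < b" unfolding P_def by auto
  moreover have "(\<Union>(a,b)\<in>P. {a..<b}) = IX"
  proof
    show "(\<Union>(a,b)\<in>P. {a..<b}) \<subseteq> IX" using B'01 unfolding P_def IX_def by force
  next
    show "IX \<subseteq> (\<Union>(a,b)\<in>P. {a..<b})"
    proof
      fix x assume x: "x \<in> IX"
      define L where "L = {y\<in>B'. y \<le> x}"
      define R where "R = {y\<in>B'. x < y}"
      have L: "finite L" "L \<noteq> {}" using x finB' unfolding L_def IX_def
        by (auto intro: finite_subset[of _ B'] simp: B'_def)
      have R: "finite R" "R \<noteq> {}" using x finB' unfolding R_def IX_def
        by (auto intro: finite_subset[of _ B'] simp: B'_def)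
      define a where "a = Max L"
      define b where "b = Min R"
      have aL: "a \<in> L" using L a_def by simp
      have bR: "b \<in> R" using R b_def by simp
      have "{a<..<b} \<inter> B' = {}"
      proof (rule ccontr)
        assume "{a<..<b} \<inter> B' \<noteq> {}"
        then obtain y where y: "y \<in> B'" "a < y" "y < b" by auto
        show False
        proof (cases "y \<le> x")
          case True
          hence "y \<in> L" using y L_def by auto
          hence "y \<le> a" using L a_def by simp
          thus False using y by simp
        next
          case False
          hence "y \<in> R" using y R_def by auto
          hence "b \<le> y" using R b_def by simp
          thus False using y by simp
        qed
      qed
      moreover have "a \<in> B'" "b \<in> B'" "a \<le> x" "x < b" using aL bR L_def R_def by auto
      ultimately have "(a,b) \<in> P" "x \<in> {a..<b}" unfolding P_def by auto
      thus "x \<in> (\<Union>(a,b)\<in>P. {a..<b})" by blast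
    qed
  qed
  moreover have "\<forall>p\<in>P. \<forall>q\<in>P. p \<noteq> q \<longrightarrow> {fst p..<snd p} \<inter> {fst q..<snd q} = {}"
  proof (intro ballI impI)
    fix p q assume pq: "p \<in> P" "q \<in> P" "p \<noteq> q"
    obtain a b a' b' where p: "p = (a,b)" and q: "q = (a',b')" by fastforce
    have hp: "a \<in> B'" "b \<in> B'" "a < b" "{a<..<b} \<inter> B' = {}" using pq p unfolding P_def by auto
    have hq: "a' \<in> B'" "b' \<in> B'" "a' < b'" "{a'<..<b'} \<inter> B' = {}" using pq q unfolding P_def by auto
    show "{fst p..<snd p} \<inter> {fst q..<snd q} = {}"
    proof (rule ccontr)
      assume "{fst p..<snd p} \<inter> {fst q..<snd q} \<noteq> {}"
      hence "a < b'" "a' < b" using p q by auto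
      define x where "x = max a a'"
      have x: "a \<le> x" "x < b" "a' \<le> x" "x < b'" using \<open>a < b'\<close> \<open>a' < b\<close> hp hq unfolding x_def by auto
      have n: "a' \<notin> {a<..<b}" "a \<notin> {a'<..<b'}" "b \<notin> {a'<..<b'}" "b' \<notin> {a<..<b}"
        using hp hq by blast+
      have "\<not> a < a'" using n hp hq x by auto
      moreover have "\<not> a' < a" using n hp hq x by auto
      moreover have "\<not> b < b'" using n hp hq x by auto
      moreover have "\<not> b' < b" using n hp hq x by auto
      ultimately have "a = a'" "b = b'" by auto
      thus False using pq p q by simp
    qed
  qed
  moreover have "\<forall>(a,b)\<in>P. \<exists>c. (\<forall>x\<in>{a<..<b}. f x = x + c) \<or> (\<forall>x\<in>{a<..<b}. f x = - x + c)"
  proof (clarify)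
    fix a b assume "(a,b) \<in> P"
    hence h: "a \<in> B'" "b \<in> B'" "a < b" "{a<..<b} \<inter> B' = {}" unfolding P_def by auto
    have "0 \<le> a" "b \<le> 1" using h B'01 by auto
    moreover have "{a<..<b} \<inter> B = {}" using h(4) \<open>0 \<le> a\<close> \<open>b \<le> 1\<close> unfolding B'_def by auto
    ultimately have "aff f a b" using bp h by auto
    thus "\<exists>c. (\<forall>x\<in>{a<..<b}. f x = x + c) \<or> (\<forall>x\<in>{a<..<b}. f x = - x + c)" unfolding aff_def .
  qed
  ultimately show ?thesis unfolding piecewise_isom_def by blast
qed

lemma L1t:
  fixes f :: "real \<Rightarrow> real"
  assumes "u < v" "\<forall>x\<in>{u<..<v}. f x = x + c" "finite S" "\<forall>x\<in>{u<..<v} - S. f x \<in> {p..q}"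
  shows "p \<le> u + c \<and> v + c \<le> q"
proof (rule ccontr)
  assume "\<not> (p \<le> u + c \<and> v + c \<le> q)"
  hence "u + c < p \<or> q < v + c" by linarith
  thus False
  proof (elim disjE)
    assume 1: "u + c < p"
    define w where "w = min v (p - c)"
    have "u < w" using 1 assms(1) w_def by auto
    have "{u<..<w} \<subseteq> S"
    proof
      fix x assume x: "x \<in> {u<..<w}"
      show "x \<in> S"
      proof (rule ccontr)
        assume "x \<notin> S"
        hence "f x \<in> {p..q}" "f x = x + c" using assms x w_def by auto
        thus False using x w_def by auto
      qed
    qed
    thus False using \<open>u < w\<close> assms(3) by (metis finite_subset infinite_Ioo_iff)
  next
    assume 2: "q < v + c"
    define w where "w = max u (q - c)"
    have "w < v" using 2 assms(1) w_def by auto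
    have "{w<..<v} \<subseteq> S"
    proof
      fix x assume x: "x \<in> {w<..<v}"
      show "x \<in> S"
      proof (rule ccontr)
        assume "x \<notin> S"
        hence "f x \<in> {p..q}" "f x = x + c" using assms x w_def by auto
        thus False using x w_def by auto
      qed
    qed
    thus False using \<open>w < v\<close> assms(3) by (metis finite_subset infinite_Ioo_iff)
  qed
qed

lemma L1r:
  fixes f :: "real \<Rightarrow> real"
  assumes "u < v" "\<forall>x\<in>{u<..<v}. f x = - x + c" "finite S" "\<forall>x\<in>{u<..<v} - S. f x \<in> {p..q}"
  shows "p \<le> c - v \<and> c - u \<le> q"
proof -
  define g where "g x = f (- x)" for x
  have "\<forall>x\<in>{-v<..<-u}. g x = x + c"
  proof
    fix x assume "x \<in> {-v<..<-u}"
    hence "-x \<in> {u<..<v}" by auto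
    thus "g x = x + c" using assms(2) unfolding g_def by auto
  qed
  moreover have "\<forall>x\<in>{-v<..<-u} - uminus ` S. g x \<in> {p..q}"
  proof
    fix x assume x: "x \<in> {-v<..<-u} - uminus ` S"
    hence "-x \<in> {u<..<v} - S" by (auto simp: image_iff)
    thus "g x \<in> {p..q}" using assms(4) g_def by auto
  qed
  ultimately have "p \<le> -v + c \<and> -u + c \<le> q" using L1t[of "-v" "-u" g c "uminus ` S" p q] assms by auto
  thus ?thesis by auto
qed

lemma carrier_inj: assumes "f \<in> IETh_carrier" shows "inj f"
proof (rule injI)
  fix x y assume e: "f x = f y"
  have b: "bij_betw f IX IX" and o: "\<forall>x. x \<notin> IX \<longrightarrow> f x = x" using assms unfolding IETh_carrier_def by auto
  show "x = y"
  proof (cases "x \<in> IX")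
    case True
    show ?thesis
    proof (cases "y \<in> IX")
      case True
      thus ?thesis using \<open>x \<in> IX\<close> e b by (meson bij_betw_imp_inj_on inj_onD)
    next
      case False
      thus ?thesis using \<open>x \<in> IX\<close> e b o by (metis bij_betwE)
    qed
  next
    case False
    thus ?thesis using e b o by (metis bij_betwE)
  qed
qed

lemma carrier_surj: assumes "f \<in> IETh_carrier" shows "surj f"
proof -
  have b: "bij_betw f IX IX" and o: "\<forall>x. x \<notin> IX \<longrightarrow> f x = x" using assms unfolding IETh_carrier_def by auto
  show ?thesis
  proof (rule surjI[of _ "\<lambda>y. if y \<in> IX then inv_into IX f y else y"])
    fix y show "f (if y \<in> IX then inv_into IX f y else y) = y"
      using b o by (auto simp: bij_betw_inv_into_right)
  qed
qed

lemma carrier_bij: "f \<in> IETh_carrier \<Longrightarrow> bij f"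
  by (simp add: bij_def carrier_inj carrier_surj)

lemma carrier_in: "f \<in> IETh_carrier \<Longrightarrow> x \<in> IX \<Longrightarrow> f x \<in> IX"
  unfolding IETh_carrier_def by (auto dest: bij_betwE)

lemma carrier_BP: "f \<in> IETh_carrier \<Longrightarrow> \<exists>B. BP f B"
  unfolding IETh_carrier_def using PI_BP by auto

lemma carrierI:
  assumes "bij_betw f IX IX" "\<forall>x. x \<notin> IX \<longrightarrow> f x = x" "BP f B"
  shows "f \<in> IETh_carrier"
  using assms BP_PI unfolding IETh_carrier_def by auto

lemma comp_closed:
  assumes f: "f \<in> IETh_carrier" and g: "g \<in> IETh_carrier"
  shows "f \<circ> g \<in> IETh_carrier"
proof -
  obtain Bf where Bf: "BP f Bf" using carrier_BP f by blast
  obtain Bg where Bg: "BP g Bg" using carrier_BP g by blast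
  define B where "B = Bg \<union> (g -` Bf \<inter> IX)"
  have "BP (f \<circ> g) B" unfolding BP_def
  proof (intro conjI allI impI)
    show "finite B" unfolding B_def using Bf Bg carrier_inj[OF g] unfolding BP_def
      by (auto intro: finite_vimage_IntI inj_on_subset)
    fix u v :: real assume h: "0 \<le> u" "u < v" "v \<le> 1" "{u<..<v} \<inter> B = {}"
    have "{u<..<v} \<inter> Bg = {}" using h(4) unfolding B_def by auto
    hence "aff g u v" using h Bg unfolding BP_def by auto
    then obtain c where c: "(\<forall>x\<in>{u<..<v}. g x = x + c) \<or> (\<forall>x\<in>{u<..<v}. g x = - x + c)"
      unfolding aff_def by blast
    have inI: "\<forall>x\<in>{u<..<v} - {}. g x \<in> {0..1}"
    proof
      fix x assume "x \<in> {u<..<v} - {}"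
      hence "x \<in> IX" using h unfolding IX_def by auto
      thus "g x \<in> {0..1}" using carrier_in[OF g] unfolding IX_def by force
    qed
    have avoid: "g x \<notin> Bf" if "x \<in> {u<..<v}" for x
      using h(1,3,4) that unfolding B_def IX_def by auto
    from c show "aff (f \<circ> g) u v"
    proof
      assume gt: "\<forall>x\<in>{u<..<v}. g x = x + c"
      have "0 \<le> u + c \<and> v + c \<le> 1" using L1t[OF h(2) gt _ inI] by simp
      moreover have "greaterThanLessThan (u + c) (v + c) \<inter> Bf = {}"
      proof (rule ccontr)
        assume "greaterThanLessThan (u + c) (v + c) \<inter> Bf \<noteq> {}"
        then obtain y where "y \<in> Bf" "u + c < y" "y < v + c" by auto
        hence "y - c \<in> {u<..<v}" "g (y - c) = y" using gt by auto
        thus False using avoid \<open>y \<in> Bf\<close> by metis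
      qed
      ultimately have "aff f (u + c) (v + c)" using Bf h unfolding BP_def by auto
      then obtain d where d: "(\<forall>x\<in>greaterThanLessThan (u + c) (v + c). f x = x + d) \<or> (\<forall>x\<in>greaterThanLessThan (u + c) (v + c). f x = - x + d)"
        unfolding aff_def by blast
      thus ?thesis unfolding aff_def
      proof
        assume "\<forall>x\<in>greaterThanLessThan (u + c) (v + c). f x = x + d"
        hence "\<forall>x\<in>{u<..<v}. (f \<circ> g) x = x + (c + d)" using gt by auto
        thus "\<exists>c. (\<forall>x\<in>{u<..<v}. (f \<circ> g) x = x + c) \<or> (\<forall>x\<in>{u<..<v}. (f \<circ> g) x = - x + c)" by blast
      next
        assume "\<forall>x\<in>greaterThanLessThan (u + c) (v + c). f x = - x + d"
        hence "\<forall>x\<in>{u<..<v}. (f \<circ> g) x = - x + (d - c)" using gt by auto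
        thus "\<exists>c. (\<forall>x\<in>{u<..<v}. (f \<circ> g) x = x + c) \<or> (\<forall>x\<in>{u<..<v}. (f \<circ> g) x = - x + c)" by blast
      qed
    next
      assume gt: "\<forall>x\<in>{u<..<v}. g x = - x + c"
      have "0 \<le> c - v \<and> c - u \<le> 1" using L1r[OF h(2) gt _ inI] by simp
      moreover have "greaterThanLessThan (c - v) (c - u) \<inter> Bf = {}"
      proof (rule ccontr)
        assume "greaterThanLessThan (c - v) (c - u) \<inter> Bf \<noteq> {}"
        then obtain y where "y \<in> Bf" "c - v < y" "y < c - u" by auto
        hence "c - y \<in> {u<..<v}" "g (c - y) = y" using gt by auto
        thus False using avoid \<open>y \<in> Bf\<close> by metis
      qed
      ultimately have "aff f (c - v) (c - u)" using Bf h unfolding BP_def by auto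
      then obtain d where d: "(\<forall>x\<in>greaterThanLessThan (c - v) (c - u). f x = x + d) \<or> (\<forall>x\<in>greaterThanLessThan (c - v) (c - u). f x = - x + d)"
        unfolding aff_def by blast
      thus ?thesis unfolding aff_def
      proof
        assume "\<forall>x\<in>greaterThanLessThan (c - v) (c - u). f x = x + d"
        hence "\<forall>x\<in>{u<..<v}. (f \<circ> g) x = - x + (c + d)" using gt by auto
        thus "\<exists>c. (\<forall>x\<in>{u<..<v}. (f \<circ> g) x = x + c) \<or> (\<forall>x\<in>{u<..<v}. (f \<circ> g) x = - x + c)" by blast
      next
        assume "\<forall>x\<in>greaterThanLessThan (c - v) (c - u). f x = - x + d"
        hence "\<forall>x\<in>{u<..<v}. (f \<circ> g) x = x + (d - c)" using gt by auto
        thus "\<exists>c. (\<forall>x\<in>{u<..<v}. (f \<circ> g) x = x + c) \<or> (\<forall>x\<in>{u<..<v}. (f \<circ> g) x = - x + c)" by blast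
      qed
    qed
  qed
  moreover have "bij_betw (f \<circ> g) IX IX" using f g unfolding IETh_carrier_def using bij_betw_trans by blast
  moreover have "\<forall>x. x \<notin> IX \<longrightarrow> (f \<circ> g) x = x" using f g unfolding IETh_carrier_def by auto
  ultimately show ?thesis using carrierI by blast
qed

lemma fin_mod:
  assumes h: "h \<in> IETh_carrier" and "bij_betw f IX IX" "\<forall>x. x \<notin> IX \<longrightarrow> f x = x"
    and fin: "finite {x. f x \<noteq> h x}"
  shows "f \<in> IETh_carrier"
proof -
  obtain Bh where Bh: "BP h Bh" using carrier_BP h by blast
  have "BP f (Bh \<union> {x. f x \<noteq> h x})" unfolding BP_def
  proof (intro conjI allI impI)
    show "finite (Bh \<union> {x. f x \<noteq> h x})" using Bh fin unfolding BP_def by auto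
    fix u v :: real assume hh: "0 \<le> u" "u < v" "v \<le> 1" "{u<..<v} \<inter> (Bh \<union> {x. f x \<noteq> h x}) = {}"
    hence "aff h u v" using Bh unfolding BP_def by auto
    moreover have "\<forall>x\<in>{u<..<v}. f x = h x" using hh(4) by auto
    ultimately show "aff f u v" unfolding aff_def by auto
  qed
  thus ?thesis using assms carrierI by blast
qed

lemma flip_invol: "flip a b (flip a b x) = x"
  unfolding flip_def by auto

lemma flip_carrier:
  assumes "0 \<le> a" "a < b" "b \<le> 1"
  shows "flip a b \<in> IETh_carrier"
proof (rule carrierI)
  show "bij_betw (flip a b) IX IX"
    by (rule bij_betw_byWitness[of _ "flip a b"]) (use assms in \<open>auto simp: flip_invol flip_def IX_def\<close>)
  show "\<forall>x. x \<notin> IX \<longrightarrow> flip a b x = x" using assms unfolding flip_def IX_def by auto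
  show "BP (flip a b) {a,b}" unfolding BP_def
  proof (intro conjI allI impI)
    fix u v :: real assume h: "0 \<le> u" "u < v" "v \<le> 1" "{u<..<v} \<inter> {a,b} = {}"
    hence ab: "a \<notin> {u<..<v}" "b \<notin> {u<..<v}" by auto
    show "aff (flip a b) u v"
    proof (cases "a \<le> u \<and> v \<le> b")
      case True
      hence "\<forall>x\<in>{u<..<v}. flip a b x = - x + (a + b)" unfolding flip_def by auto
      thus ?thesis unfolding aff_def by blast
    next
      case False
      have "\<forall>x\<in>{u<..<v}. flip a b x = x + 0"
      proof
        fix x assume x: "x \<in> {u<..<v}"
        have "\<not> (a < x \<and> x < b)"
        proof
          assume ax: "a < x \<and> x < b"
          from False have "u < a \<or> b < v" by linarith
          thus False
          proof
            assume "u < a" hence "a \<in> {u<..<v}" using ax x by auto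
            thus False using ab by blast
          next
            assume "b < v" hence "b \<in> {u<..<v}" using ax x by auto
            thus False using ab by blast
          qed
        qed
        thus "flip a b x = x + 0" unfolding flip_def by auto
      qed
      thus ?thesis unfolding aff_def by blast
    qed
  qed simp
qed

lemma flips_carrier: "flips \<subseteq> IETh_carrier"
  unfolding flips_def using flip_carrier by auto

definition Good :: "(real \<Rightarrow> real) \<Rightarrow> bool" where
  "Good f \<longleftrightarrow> (\<exists>ps. set ps \<subseteq> flips \<and> finite {x. f x \<noteq> foldr (\<circ>) ps id x})"

lemma Good_cons:
  assumes "Good g" "0 \<le> a" "a < b" "b \<le> 1"
  shows "Good (\<lambda>x. flip a b (g x))"
proof -
  obtain ps where ps: "set ps \<subseteq> flips" "finite {x. g x \<noteq> foldr (\<circ>) ps id x}"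
    using assms(1) Good_def by blast
  have "flip a b \<in> flips" using assms unfolding flips_def by blast
  hence "set (flip a b # ps) \<subseteq> flips" using ps by auto
  moreover have "{x. flip a b (g x) \<noteq> foldr (\<circ>) (flip a b # ps) id x} \<subseteq> {x. g x \<noteq> foldr (\<circ>) ps id x}"
    by auto
  ultimately show ?thesis unfolding Good_def using ps(2) finite_subset by blast
qed

definition Sx :: "(real \<Rightarrow> real) \<Rightarrow> real \<Rightarrow> real set" where
  "Sx f t = {x\<in>{t<..<1}. f x \<notin> {t..1}}"

lemma Sx_fin:
  assumes f: "f \<in> IETh_carrier" and F: "finite F" and id: "\<forall>x\<in>{0<..<t} - F. f x = x" and t: "0 \<le> t"
  shows "finite (Sx f t)"
proof -
  have "Sx f t \<subseteq> f -` (insert 0 F) \<inter> IX"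
  proof
    fix x assume x: "x \<in> Sx f t"
    hence xI: "x \<in> IX" "t < x" using t unfolding Sx_def IX_def by auto
    hence fx: "f x \<in> IX" using carrier_in f by blast
    have "f x < t" using x fx unfolding Sx_def IX_def by auto
    have "f x \<in> insert 0 F"
    proof (rule ccontr)
      assume "f x \<notin> insert 0 F"
      hence "f x \<in> {0<..<t} - F" using fx \<open>f x < t\<close> unfolding IX_def by auto
      hence "f (f x) = f x" using id by blast
      hence "f x = x" using carrier_inj[OF f] by (meson injD)
      thus False using \<open>f x < t\<close> xI by auto
    qed
    thus "x \<in> f -` (insert 0 F) \<inter> IX" using xI by auto
  qed
  moreover have "finite (f -` (insert 0 F) \<inter> IX)"
    using F carrier_inj[OF f] by (auto intro: finite_vimage_IntI inj_on_subset)
  ultimately show ?thesis using finite_subset by blast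
qed

lemma Sx_use: "x \<in> {t<..<1} \<Longrightarrow> x \<notin> Sx f t \<Longrightarrow> f x \<in> {t..1}"
  unfolding Sx_def by auto

definition Hy :: "nat \<Rightarrow> real \<Rightarrow> (real \<Rightarrow> real) \<Rightarrow> real set \<Rightarrow> real set \<Rightarrow> bool" where
  "Hy n t f F B \<longleftrightarrow> card B = n \<and> finite B \<and> B \<subseteq> {t<..<1} \<and> 0 \<le> t \<and> t < 1 \<and>
     f \<in> IETh_carrier \<and> finite F \<and> (\<forall>x\<in>{0<..<t} - F. f x = x) \<and>
     (\<forall>u v. t \<le> u \<longrightarrow> u < v \<longrightarrow> v \<le> 1 \<longrightarrow> {u<..<v} \<inter> B = {} \<longrightarrow> aff f u v)"

lemma base:
  assumes "Hy 0 t f F B" shows "Good f"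
proof -
  have h: "B = {}" "0 \<le> t" "t < 1" "f \<in> IETh_carrier" "finite F" "\<forall>x\<in>{0<..<t} - F. f x = x"
    "aff f t 1" using assms unfolding Hy_def by auto
  have fS: "finite (Sx f t)" using Sx_fin h by blast
  have inS: "\<forall>x\<in>{t<..<1} - Sx f t. f x \<in> {t..1}" using Sx_use by blast
  have out: "f x = x" if "x \<notin> IX" for x using h(4) that unfolding IETh_carrier_def by auto
  obtain c where c: "(\<forall>x\<in>{t<..<1}. f x = x + c) \<or> (\<forall>x\<in>{t<..<1}. f x = - x + c)"
    using h(7) unfolding aff_def by blast
  thus ?thesis
  proof
    assume tr: "\<forall>x\<in>{t<..<1}. f x = x + c"
    have "t \<le> t + c \<and> 1 + c \<le> 1" using L1t[OF h(3) tr fS inS] .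
    hence c0: "c = 0" by auto
    have "{x. f x \<noteq> foldr (\<circ>) [] id x} \<subseteq> insert 0 (insert t F)"
    proof
      fix x assume x: "x \<in> {x. f x \<noteq> foldr (\<circ>) [] id x}"
      hence ne: "f x \<noteq> x" by simp
      show "x \<in> insert 0 (insert t F)"
      proof (rule ccontr)
        assume nx: "x \<notin> insert 0 (insert t F)"
        have "x \<in> IX" using out ne by blast
        hence "x \<in> {0<..<t} - F \<or> x \<in> {t<..<1}" using nx unfolding IX_def by auto
        thus False using h(6) tr c0 ne by auto
      qed
    qed
    thus ?thesis unfolding Good_def using h(5) finite_subset by (intro exI[of _ "[]"]) auto
  next
    assume rf: "\<forall>x\<in>{t<..<1}. f x = - x + c"
    have "t \<le> c - 1 \<and> c - t \<le> 1" using L1r[OF h(3) rf fS inS] .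
    hence c1: "c = 1 + t" by auto
    have fl: "flip t 1 \<in> flips" using h unfolding flips_def by auto
    have "{x. f x \<noteq> foldr (\<circ>) [flip t 1] id x} \<subseteq> insert 0 (insert t F)"
    proof
      fix x assume x: "x \<in> {x. f x \<noteq> foldr (\<circ>) [flip t 1] id x}"
      hence ne: "f x \<noteq> flip t 1 x" by simp
      show "x \<in> insert 0 (insert t F)"
      proof (rule ccontr)
        assume nx: "x \<notin> insert 0 (insert t F)"
        have "x \<in> IX"
        proof (rule ccontr)
          assume "x \<notin> IX"
          hence "f x = x" "flip t 1 x = x" using out h unfolding flip_def IX_def by auto
          thus False using ne by simp
        qed
        hence "x \<in> {0<..<t} - F \<or> x \<in> {t<..<1}" using nx unfolding IX_def by auto
        thus False using h(6) rf c1 ne unfolding flip_def by auto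
      qed
    qed
    thus ?thesis unfolding Good_def using h(5) fl finite_subset by (intro exI[of _ "[flip t 1]"]) auto
  qed
qed

lemma aff_shift: "aff f u v \<Longrightarrow> \<forall>x\<in>{u<..<v}. g x = f x + k \<Longrightarrow> aff g u v"
  unfolding aff_def by (metis add.assoc)

lemma dich:
  fixes f :: "real \<Rightarrow> real"
  assumes uv: "u < v" and af: "aff f u v" and no: "\<forall>x\<in>{u<..<v}. f x \<notin> {p<..<q}" and S: "finite S"
    and inS: "\<forall>x\<in>{u<..<v} - S. f x \<in> {t..1}" and pq: "t \<le> p" "p < q" "q \<le> 1"
  shows "(\<forall>x\<in>{u<..<v}. t < f x \<and> f x < p) \<or> (\<forall>x\<in>{u<..<v}. q < f x \<and> f x < 1)"
proof -
  obtain d where d: "(\<forall>x\<in>{u<..<v}. f x = x + d) \<or> (\<forall>x\<in>{u<..<v}. f x = - x + d)"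
    using af unfolding aff_def by blast
  thus ?thesis
  proof
    assume tr: "\<forall>x\<in>{u<..<v}. f x = x + d"
    have L: "t \<le> u + d \<and> v + d \<le> 1" using L1t[OF uv tr S inS] .
    show ?thesis
    proof (cases "v + d \<le> p")
      case True
      thus ?thesis using tr L by auto
    next
      case False
      have "q \<le> u + d"
      proof (rule ccontr)
        assume "\<not> q \<le> u + d"
        define y0 where "y0 = (max (u + d) p + min (v + d) q) / 2"
        have "max (u + d) p < y0" "y0 < min (v + d) q" using False uv pq \<open>\<not> q \<le> u + d\<close>
          unfolding y0_def by auto
        hence "y0 - d \<in> {u<..<v}" "y0 \<in> {p<..<q}" by auto
        moreover have "f (y0 - d) = y0" using tr \<open>y0 - d \<in> {u<..<v}\<close> by auto
        ultimately show False using no by metis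
      qed
      thus ?thesis using tr L by auto
    qed
  next
    assume tr: "\<forall>x\<in>{u<..<v}. f x = - x + d"
    have L: "t \<le> d - v \<and> d - u \<le> 1" using L1r[OF uv tr S inS] .
    show ?thesis
    proof (cases "d - u \<le> p")
      case True
      thus ?thesis using tr L by auto
    next
      case False
      have "q \<le> d - v"
      proof (rule ccontr)
        assume "\<not> q \<le> d - v"
        define y0 where "y0 = (max (d - v) p + min (d - u) q) / 2"
        have "max (d - v) p < y0" "y0 < min (d - u) q" using False uv pq \<open>\<not> q \<le> d - v\<close>
          unfolding y0_def by auto
        hence "d - y0 \<in> {u<..<v}" "y0 \<in> {p<..<q}" by auto
        moreover have "f (d - y0) = y0" using tr \<open>d - y0 \<in> {u<..<v}\<close> by auto
        ultimately show False using no by metis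
      qed
      thus ?thesis using tr L by auto
    qed
  qed
qed

lemma Hy_unpack:
  assumes "Hy (Suc n) t f F B"
  shows "card B = Suc n" "finite B" "B \<subseteq> {t<..<1}" "0 \<le> t" "t < 1"
     "f \<in> IETh_carrier" "finite F" "\<forall>x\<in>{0<..<t} - F. f x = x"
     "\<And>u v. t \<le> u \<Longrightarrow> u < v \<Longrightarrow> v \<le> 1 \<Longrightarrow> {u<..<v} \<inter> B = {} \<Longrightarrow> aff f u v"
  using assms unfolding Hy_def by auto

lemma Min_facts:
  assumes "card B = Suc n" "finite B" "B \<subseteq> {t<..<1}" "b = Min B"
  shows "b \<in> B" "t < b" "b < 1" "card (B - {b}) = n" "B - {b} \<subseteq> {b<..<1}"
    "\<And>y. y \<in> B \<Longrightarrow> b \<le> y"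
proof -
  have ne: "B \<noteq> {}" using assms(1) by auto
  show bB: "b \<in> B" using assms ne by simp
  thus "t < b" "b < 1" using assms(3) by auto
  show "card (B - {b}) = n" using assms(1,2) bB by simp
  show le: "\<And>y. y \<in> B \<Longrightarrow> b \<le> y" using assms(2,4) by simp
  show "B - {b} \<subseteq> {b<..<1}"
  proof
    fix y assume y: "y \<in> B - {b}"
    hence "b \<le> y" "y \<noteq> b" "y < 1" using le assms(3) by auto
    thus "y \<in> {b<..<1}" by auto
  qed
qed

lemma step_trans:
  assumes H: "Hy (Suc n) t f F B" and IH: "\<And>t f F B. Hy n t f F B \<Longrightarrow> Good f"
    and b: "b = Min B" and tr: "\<forall>x\<in>{t<..<b}. f x = x + c"
  shows "Good f"
proof -
  note h = Hy_unpack[OF H]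
  note m = Min_facts[OF h(1,2,3) b]
  define B' where "B' = B - {b}"
  have fS: "finite (Sx f t)" using Sx_fin h by blast
  have inS: "\<forall>x\<in>{t<..<b} - Sx f t. f x \<in> {t..1}" using Sx_use m by auto
  have L: "t \<le> t + c \<and> b + c \<le> 1" using L1t[OF m(2) tr fS inS] .
  define p where "p = t + c"
  define q where "q = b + c"
  have pq: "t \<le> p" "p < q" "q \<le> 1" using L m unfolding p_def q_def by auto
  have inj: "inj f" using carrier_inj h(6) by blast
  have notin: "f x \<notin> {p<..<q}" if "b \<le> x" for x
  proof
    assume fx: "f x \<in> {p<..<q}"
    hence "f x - c \<in> {t<..<b}" unfolding p_def q_def by auto
    hence "f (f x - c) = f x" using tr by auto
    hence "f x - c = x" using inj by (meson injD)
    thus False using fx that unfolding q_def by auto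
  qed
  have affB: "aff f u v" if "b \<le> u" "u < v" "v \<le> 1" "{u<..<v} \<inter> B' = {}" for u v
  proof -
    have "{u<..<v} \<inter> B = {}" using that unfolding B'_def by auto
    thus ?thesis using h(9) that m by auto
  qed
  have inS2: "\<forall>x\<in>{u<..<v} - Sx f t. f x \<in> {t..1}" if "b \<le> u" "v \<le> 1" for u v
  proof
    fix x assume "x \<in> {u<..<v} - Sx f t"
    hence "x \<in> {t<..<1}" "x \<notin> Sx f t" using that m(2) by auto
    thus "f x \<in> {t..1}" using Sx_use by blast
  qed
  show ?thesis
  proof (cases "c = 0")
    case True
    have "Hy n b f (insert t F) B'" unfolding Hy_def
    proof (intro conjI allI impI ballI)
      show "card B' = n" "finite B'" "B' \<subseteq> {b<..<1}" using m h unfolding B'_def by auto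
      show "0 \<le> b" "b < 1" "f \<in> IETh_carrier" "finite (insert t F)" using m h by auto
      fix x assume x: "x \<in> {0<..<b} - insert t F"
      show "f x = x"
      proof (cases "x < t")
        case True thus ?thesis using x h(8) by auto
      next
        case False thus ?thesis using x tr \<open>c = 0\<close> by auto
      qed
    next
      fix u v assume "b \<le> u" "u < v" "v \<le> 1" "{u<..<v} \<inter> B' = {}"
      thus "aff f u v" using affB by blast
    qed
    thus ?thesis using IH by blast
  next
    case False
    hence tp: "t < p" using L unfolding p_def by auto
    define g where "g = flip t q \<circ> (flip t p \<circ> (flip p q \<circ> f))"
    have gx: "g x = flip t q (flip t p (flip p q (f x)))" for x unfolding g_def by simp
    have Rlow: "flip t q (flip t p (flip p q y)) = y + (q - p)" if "t < y" "y < p" for y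
      using that pq unfolding flip_def by auto
    have Rmid: "flip t q (flip t p (flip p q y)) = y + (t - p)" if "p < y" "y < q" for y
      using that pq unfolding flip_def by auto
    have Rhigh: "flip t q (flip t p (flip p q y)) = y + 0" if "y \<le> t \<or> q \<le> y" for y
      using that pq unfolding flip_def by auto
    have gC: "g \<in> IETh_carrier" unfolding g_def
      using comp_closed flip_carrier h(4,6) pq tp by simp
    have "Hy n b g (insert t F) B'" unfolding Hy_def
    proof (intro conjI allI impI ballI)
      show "card B' = n" "finite B'" "B' \<subseteq> {b<..<1}" using m h unfolding B'_def by auto
      show "0 \<le> b" "b < 1" "g \<in> IETh_carrier" "finite (insert t F)" using m h gC by auto
      fix x assume x: "x \<in> {0<..<b} - insert t F"
      show "g x = x"
      proof (cases "x < t")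
        case True thus ?thesis using x h(8) gx Rhigh by auto
      next
        case False
        hence "x \<in> {t<..<b}" using x by auto
        hence "f x = x + c" "p < f x" "f x < q" using tr unfolding p_def q_def by auto
        thus ?thesis using gx Rmid unfolding p_def by auto
      qed
    next
      fix u v assume uv: "b \<le> u" "u < v" "v \<le> 1" "{u<..<v} \<inter> B' = {}"
      have af: "aff f u v" using affB uv by blast
      have no: "\<forall>x\<in>{u<..<v}. f x \<notin> {p<..<q}" using notin uv by auto
      from dich[OF uv(2) af no fS inS2[OF uv(1) uv(3)] pq]
      show "aff g u v"
      proof
        assume "\<forall>x\<in>{u<..<v}. t < f x \<and> f x < p"
        hence "\<forall>x\<in>{u<..<v}. g x = f x + (q - p)" using gx Rlow by auto
        thus ?thesis using aff_shift af by blast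
      next
        assume "\<forall>x\<in>{u<..<v}. q < f x \<and> f x < 1"
        hence "\<forall>x\<in>{u<..<v}. g x = f x + 0" using gx Rhigh by auto
        thus ?thesis using aff_shift af by blast
      qed
    qed
    hence "Good g" using IH by blast
    hence "Good (\<lambda>x. flip p q (flip t p (flip t q (g x))))" using pq tp h(4)
      by (intro Good_cons) auto
    moreover have "(\<lambda>x. flip p q (flip t p (flip t q (g x)))) = f"
      by (auto simp: fun_eq_iff gx flip_invol)
    ultimately show ?thesis by simp
  qed
qed

lemma step_refl:
  assumes H: "Hy (Suc n) t f F B" and IH: "\<And>t f F B. Hy n t f F B \<Longrightarrow> Good f"
    and b: "b = Min B" and rf: "\<forall>x\<in>{t<..<b}. f x = - x + c"
  shows "Good f"
proof -
  note h = Hy_unpack[OF H]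
  note m = Min_facts[OF h(1,2,3) b]
  have fS: "finite (Sx f t)" using Sx_fin h by blast
  have inS: "\<forall>x\<in>{t<..<b} - Sx f t. f x \<in> {t..1}" using Sx_use m by auto
  have L: "t \<le> c - b \<and> c - t \<le> 1" using L1r[OF m(2) rf fS inS] .
  define p where "p = c - b"
  define q where "q = c - t"
  have pq: "t \<le> p" "p < q" "q \<le> 1" using L m unfolding p_def q_def by auto
  have inj: "inj f" using carrier_inj h(6) by blast
  have notin: "f x \<notin> {p<..<q}" if "b \<le> x" for x
  proof
    assume fx: "f x \<in> {p<..<q}"
    hence "c - f x \<in> {t<..<b}" unfolding p_def q_def by auto
    hence "f (c - f x) = f x" using rf by auto
    hence "c - f x = x" using inj by (meson injD)
    thus False using fx that unfolding p_def by auto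
  qed
  define f1 where "f1 = flip p q \<circ> f"
  have f1x: "f1 x = flip p q (f x)" for x unfolding f1_def by simp
  have f1C: "f1 \<in> IETh_carrier" unfolding f1_def
    using comp_closed flip_carrier h(4,6) pq by simp
  have tr1: "\<forall>x\<in>{t<..<b}. f1 x = x + (p + q - c)"
  proof
    fix x assume x: "x \<in> {t<..<b}"
    hence "f x = - x + c" "p < f x" "f x < q" using rf unfolding p_def q_def by auto
    thus "f1 x = x + (p + q - c)" using f1x unfolding flip_def by auto
  qed
  have "Hy (Suc n) t f1 F B" unfolding Hy_def
  proof (intro conjI allI impI ballI)
    show "card B = Suc n" "finite B" "B \<subseteq> {t<..<1}" "0 \<le> t" "t < 1" "f1 \<in> IETh_carrier" "finite F"
      using h f1C by auto
    fix x assume x: "x \<in> {0<..<t} - F"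
    thus "f1 x = x" using h(8) f1x pq unfolding flip_def by auto
  next
    fix u v assume uv: "t \<le> u" "u < v" "v \<le> 1" "{u<..<v} \<inter> B = {}"
    show "aff f1 u v"
    proof (cases "v \<le> b")
      case True
      hence "\<forall>x\<in>{u<..<v}. f1 x = x + (p + q - c)" using tr1 uv by auto
      thus ?thesis unfolding aff_def by blast
    next
      case False
      hence "b \<le> u" using m(1) uv by (meson disjoint_iff greaterThanLessThan_iff not_le)
      have af: "aff f u v" using h(9) uv by blast
      have "\<forall>x\<in>{u<..<v}. f1 x = f x + 0"
      proof
        fix x assume "x \<in> {u<..<v}"
        hence "f x \<notin> {p<..<q}" using notin \<open>b \<le> u\<close> by auto
        thus "f1 x = f x + 0" using f1x unfolding flip_def by auto
      qed
      thus ?thesis using aff_shift af by blast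
    qed
  qed
  hence "Good f1" by (rule step_trans[OF _ IH b tr1])
  hence "Good (\<lambda>x. flip p q (f1 x))" using pq h(4) by (intro Good_cons) auto
  moreover have "(\<lambda>x. flip p q (f1 x)) = f" by (auto simp: fun_eq_iff f1x flip_invol)
  ultimately show ?thesis by simp
qed

lemma mainD: "Hy n t f F B \<Longrightarrow> Good f"
proof (induction n arbitrary: t f F B)
  case 0
  thus ?case using base by blast
next
  case (Suc n)
  note h = Hy_unpack[OF Suc.prems]
  define b where "b = Min B"
  note m = Min_facts[OF h(1,2,3) b_def]
  have "{t<..<b} \<inter> B = {}" using m by force
  hence "aff f t b" using h(9) m by auto
  then obtain c where "(\<forall>x\<in>{t<..<b}. f x = x + c) \<or> (\<forall>x\<in>{t<..<b}. f x = - x + c)"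
    unfolding aff_def by blast
  thus ?case
  proof
    assume "\<forall>x\<in>{t<..<b}. f x = x + c"
    thus ?case using step_trans[OF Suc.prems _ b_def] Suc.IH by blast
  next
    assume "\<forall>x\<in>{t<..<b}. f x = - x + c"
    thus ?case using step_refl[OF Suc.prems _ b_def] Suc.IH by blast
  qed
qed

lemma carrier_Good:
  assumes f: "f \<in> IETh_carrier" shows "Good f"
proof -
  obtain B0 where B0: "BP f B0" using carrier_BP f by blast
  define B where "B = B0 \<inter> {0<..<1}"
  have "Hy (card B) 0 f {} B" unfolding Hy_def
  proof (intro conjI allI impI ballI)
    show "finite B" using B0 unfolding BP_def B_def by auto
    show "B \<subseteq> {0<..<1}" unfolding B_def by auto
  next
    fix u v :: real assume uv: "0 \<le> u" "u < v" "v \<le> 1" "{u<..<v} \<inter> B = {}"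
    hence "{u<..<v} \<inter> B0 = {}" unfolding B_def by auto
    thus "aff f u v" using B0 uv unfolding BP_def by auto
  qed (use f in auto)
  thus ?thesis using mainD by blast
qed

lemma id_carrier: "id \<in> IETh_carrier"
proof (rule carrierI[where B="{}"])
  show "BP id {}" unfolding BP_def aff_def by (auto intro: exI[of _ 0])
qed auto

lemma flips_invol: "\<phi> \<in> flips \<Longrightarrow> \<phi> (\<phi> y) = y"
  unfolding flips_def using flip_invol by auto

lemma foldr_C: "set ps \<subseteq> flips \<Longrightarrow> foldr (\<circ>) ps id \<in> IETh_carrier"
  by (induction ps) (auto simp: id_carrier intro!: comp_closed dest: subsetD[OF flips_carrier])

lemma foldr_comp_gen: "foldr (\<circ>) xs a = foldr (\<circ>) xs id \<circ> a"
  by (induction xs) (auto simp: o_assoc)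

lemma foldr_rev_inv: "set ps \<subseteq> flips \<Longrightarrow> foldr (\<circ>) (rev ps) id (foldr (\<circ>) ps id x) = x"
proof (induction ps arbitrary: x)
  case Nil thus ?case by simp
next
  case (Cons a ps)
  have "foldr (\<circ>) (rev (a # ps)) id = foldr (\<circ>) (rev ps) id \<circ> a" by (simp add: foldr_append foldr_comp_gen[of "rev ps" a])
  hence "foldr (\<circ>) (rev (a # ps)) id (foldr (\<circ>) (a # ps) id x)
      = foldr (\<circ>) (rev ps) id (a (a (foldr (\<circ>) ps id x)))" by simp
  also have "\<dots> = foldr (\<circ>) (rev ps) id (foldr (\<circ>) ps id x)"
    using flips_invol[of a "foldr (\<circ>) ps id x"] Cons.prems by simp
  also have "\<dots> = x" by (rule Cons.IH) (use Cons.prems in auto)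
  finally show ?case .
qed

lemma inv_carrier:
  assumes f: "f \<in> IETh_carrier" shows "inv_into UNIV f \<in> IETh_carrier"
proof -
  obtain ps where ps: "set ps \<subseteq> flips" "finite {x. f x \<noteq> foldr (\<circ>) ps id x}"
    using carrier_Good[OF f] unfolding Good_def by blast
  define h where "h = foldr (\<circ>) ps id"
  define h' where "h' = foldr (\<circ>) (rev ps) id"
  have h'C: "h' \<in> IETh_carrier" unfolding h'_def using foldr_C ps by simp
  have hh: "h' (h x) = x" for x unfolding h_def h'_def using foldr_rev_inv ps by simp
  have bf: "bij f" using carrier_bij f .
  have fI: "f ` IX = IX" using f unfolding IETh_carrier_def by (simp add: bij_betw_def)
  have out: "\<forall>x. x \<notin> IX \<longrightarrow> f x = x" using f unfolding IETh_carrier_def by simp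
  have "bij_betw (inv_into UNIV f) IX IX"
  proof (rule bij_betw_imageI)
    show "inj_on (inv_into UNIV f) IX" using bij_imp_bij_inv[OF bf] bij_is_inj inj_on_subset by blast
    have "inv_into UNIV f ` (f ` IX) = IX" using bij_is_inj[OF bf] by (simp add: image_comp)
    thus "inv_into UNIV f ` IX = IX" using fI by simp
  qed
  moreover have "\<forall>x. x \<notin> IX \<longrightarrow> inv_into UNIV f x = x" using out bij_is_inj[OF bf] by (metis inv_f_f)
  moreover have "finite {x. inv_into UNIV f x \<noteq> h' x}"
  proof -
    have "{x. inv_into UNIV f x \<noteq> h' x} \<subseteq> f ` {x. f x \<noteq> h x}"
    proof
      fix y assume y: "y \<in> {x. inv_into UNIV f x \<noteq> h' x}"
      define x where "x = inv_into UNIV f y"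
      have fx: "f x = y" unfolding x_def using bf by (simp add: bij_is_surj surj_f_inv_f)
      have "h x \<noteq> y"
      proof
        assume "h x = y"
        hence "h' y = x" using hh by metis
        thus False using y x_def by simp
      qed
      thus "y \<in> f ` {x. f x \<noteq> h x}" using fx by force
    qed
    moreover have "finite (f ` {x. f x \<noteq> h x})" using ps(2) unfolding h_def by simp
    ultimately show ?thesis using finite_subset by blast
  qed
  ultimately show ?thesis using fin_mod[OF h'C] by blast
qed

lemma IETh_group: "group IETh"
proof (rule groupI)
  fix x assume x: "x \<in> carrier IETh"
  hence xC: "x \<in> IETh_carrier" unfolding IETh_def by simp
  have "inv_into UNIV x \<circ> x = id" using carrier_inj[OF xC] by simp
  thus "\<exists>y\<in>carrier IETh. y \<otimes>\<^bsub>IETh\<^esub> x = \<one>\<^bsub>IETh\<^esub>"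
    using inv_carrier[OF xC] unfolding IETh_def by auto
qed (auto simp: IETh_def id_carrier comp_closed o_assoc)

lemma IETh_inv: "f \<in> IETh_carrier \<Longrightarrow> inv\<^bsub>IETh\<^esub> f = inv_into UNIV f"
  using group.inv_equality[OF IETh_group, of "inv_into UNIV f" f] inv_carrier carrier_inj
  unfolding IETh_def by simp

lemma supp_comp: "{x. a (b x) \<noteq> x} \<subseteq> {x. b x \<noteq> x} \<union> {x. a x \<noteq> x}"
  by auto

lemma supp_conj:
  assumes "bij a" shows "{y. a (h (inv_into UNIV a y)) \<noteq> y} \<subseteq> a ` {x. h x \<noteq> x}"
proof
  fix y assume y: "y \<in> {y. a (h (inv_into UNIV a y)) \<noteq> y}"
  have e: "a (inv_into UNIV a y) = y" using assms by (simp add: bij_is_surj surj_f_inv_f)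
  hence "h (inv_into UNIV a y) \<noteq> inv_into UNIV a y" using y by auto
  thus "y \<in> a ` {x. h x \<noteq> x}" using e by force
qed

lemma Sfin_normal: "Sfin \<lhd> IETh"
proof -
  interpret G: group IETh by (rule IETh_group)
  have sub: "subgroup Sfin IETh"
  proof (rule G.subgroupI)
    show "Sfin \<subseteq> carrier IETh" unfolding Sfin_def IETh_def by auto
    show "Sfin \<noteq> {}" using id_carrier unfolding Sfin_def by (auto intro!: exI[of _ id])
  next
    fix a assume a: "a \<in> Sfin"
    hence aC: "a \<in> IETh_carrier" and fa: "finite {x. a x \<noteq> x}" unfolding Sfin_def by auto
    have "{y. inv_into UNIV a y \<noteq> y} \<subseteq> a ` {x. a x \<noteq> x}"
    proof
      fix y assume y: "y \<in> {y. inv_into UNIV a y \<noteq> y}"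
      have e: "a (inv_into UNIV a y) = y" using carrier_bij[OF aC] by (simp add: bij_is_surj surj_f_inv_f)
      hence "a (inv_into UNIV a y) \<noteq> inv_into UNIV a y" using y by auto
      thus "y \<in> a ` {x. a x \<noteq> x}" using e by (metis (mono_tags, lifting) image_eqI mem_Collect_eq)
    qed
    hence "finite {y. inv_into UNIV a y \<noteq> y}" using fa finite_subset by blast
    thus "inv\<^bsub>IETh\<^esub> a \<in> Sfin" using IETh_inv[OF aC] inv_carrier[OF aC] unfolding Sfin_def by simp
  next
    fix a b assume "a \<in> Sfin" "b \<in> Sfin"
    hence "a \<in> IETh_carrier" "b \<in> IETh_carrier" "finite {x. a x \<noteq> x}" "finite {x. b x \<noteq> x}"
      unfolding Sfin_def by auto
    moreover have "finite {x. a (b x) \<noteq> x}" using supp_comp[of a b] calculation(3,4)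
      by (meson finite_Un finite_subset)
    ultimately show "a \<otimes>\<^bsub>IETh\<^esub> b \<in> Sfin" unfolding Sfin_def IETh_def by (simp add: comp_closed)
  qed
  show ?thesis unfolding G.normal_inv_iff
  proof (intro conjI ballI sub)
    fix x h assume x: "x \<in> carrier IETh" and h: "h \<in> Sfin"
    hence xC: "x \<in> IETh_carrier" unfolding IETh_def by simp
    have hC: "h \<in> IETh_carrier" and fh: "finite {x. h x \<noteq> x}" using h unfolding Sfin_def by auto
    have "finite {y. x (h (inv_into UNIV x y)) \<noteq> y}"
      using supp_conj[OF carrier_bij[OF xC], of h] fh finite_subset by blast
    moreover have "x \<circ> h \<circ> inv_into UNIV x \<in> IETh_carrier" using comp_closed xC hC inv_carrier by blast
    ultimately show "x \<otimes>\<^bsub>IETh\<^esub> h \<otimes>\<^bsub>IETh\<^esub> inv\<^bsub>IETh\<^esub> x \<in> Sfin"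
      using IETh_inv[OF xC] unfolding Sfin_def IETh_def by simp
  qed
qed

lemma coset_foldr_gen:
  assumes "set ps \<subseteq> flips"
  shows "Sfin #>\<^bsub>IETh\<^esub> foldr (\<circ>) ps id \<in> generate IET ((\<lambda>f. Sfin #>\<^bsub>IETh\<^esub> f) ` flips)"
  using assms
proof (induction ps)
  case Nil
  interpret G: group IETh by (rule IETh_group)
  have "Sfin #>\<^bsub>IETh\<^esub> id = Sfin"
    using G.coset_mult_one[of Sfin] unfolding Sfin_def by (simp add: IETh_def)
  moreover have "\<one>\<^bsub>IET\<^esub> = Sfin" unfolding IET_def FactGroup_def by simp
  ultimately have "Sfin #>\<^bsub>IETh\<^esub> id \<in> generate IET ((\<lambda>f. Sfin #>\<^bsub>IETh\<^esub> f) ` flips)"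
    using generate.one[of IET] by metis
  thus ?case by (simp add: id_def)
next
  case (Cons a ps)
  interpret N: normal Sfin IETh by (rule Sfin_normal)
  have aC: "a \<in> IETh_carrier" using Cons.prems flips_carrier by auto
  have pC: "foldr (\<circ>) ps id \<in> IETh_carrier" using Cons.prems foldr_C by auto
  have "(Sfin #>\<^bsub>IETh\<^esub> a) <#>\<^bsub>IETh\<^esub> (Sfin #>\<^bsub>IETh\<^esub> foldr (\<circ>) ps id)
        = Sfin #>\<^bsub>IETh\<^esub> (a \<otimes>\<^bsub>IETh\<^esub> foldr (\<circ>) ps id)"
    using N.rcos_sum aC pC unfolding IETh_def by simp
  hence e: "(Sfin #>\<^bsub>IETh\<^esub> a) \<otimes>\<^bsub>IET\<^esub> (Sfin #>\<^bsub>IETh\<^esub> foldr (\<circ>) ps id)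
        = Sfin #>\<^bsub>IETh\<^esub> foldr (\<circ>) (a # ps) id"
    unfolding IET_def FactGroup_def by (simp add: IETh_def)
  have "Sfin #>\<^bsub>IETh\<^esub> a \<in> generate IET ((\<lambda>f. Sfin #>\<^bsub>IETh\<^esub> f) ` flips)"
    using Cons.prems by (intro generate.incl) auto
  moreover have "Sfin #>\<^bsub>IETh\<^esub> foldr (\<circ>) ps id \<in> generate IET ((\<lambda>f. Sfin #>\<^bsub>IETh\<^esub> f) ` flips)"
    by (rule Cons.IH) (use Cons.prems in auto)
  ultimately show ?case using generate.eng e by metis
qed

theorem lemma4p8:
  shows "generate IET ((\<lambda>f. Sfin #>\<^bsub>IETh\<^esub> f) ` flips) = carrier IET"
proof
  interpret N: normal Sfin IETh by (rule Sfin_normal)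
  interpret G: group IETh by (rule IETh_group)
  have cI: "carrier IET = rcosets\<^bsub>IETh\<^esub> Sfin" unfolding IET_def FactGroup_def by simp
  have gI: "group IET" unfolding IET_def by (rule N.factorgroup_is_group)
  have sub: "(\<lambda>f. Sfin #>\<^bsub>IETh\<^esub> f) ` flips \<subseteq> carrier IET"
    unfolding cI RCOSETS_def using flips_carrier unfolding IETh_def by auto
  show "generate IET ((\<lambda>f. Sfin #>\<^bsub>IETh\<^esub> f) ` flips) \<subseteq> carrier IET"
    using group.generate_in_carrier[OF gI sub] by blast
  show "carrier IET \<subseteq> generate IET ((\<lambda>f. Sfin #>\<^bsub>IETh\<^esub> f) ` flips)"
  proof
    fix M assume "M \<in> carrier IET"
    then obtain f where f: "f \<in> IETh_carrier" and M: "M = Sfin #>\<^bsub>IETh\<^esub> f"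
      unfolding cI RCOSETS_def IETh_def by auto
    obtain ps where ps: "set ps \<subseteq> flips" "finite {x. f x \<noteq> foldr (\<circ>) ps id x}"
      using carrier_Good[OF f] unfolding Good_def by blast
    define h where "h = foldr (\<circ>) ps id"
    have hC: "h \<in> IETh_carrier" unfolding h_def using foldr_C ps by simp
    have bh: "bij h" using carrier_bij hC .
    define s where "s = f \<circ> inv_into UNIV h"
    have sC: "s \<in> IETh_carrier" unfolding s_def using comp_closed f inv_carrier hC by blast
    have "{y. s y \<noteq> y} \<subseteq> h ` {x. f x \<noteq> h x}"
    proof
      fix y assume y: "y \<in> {y. s y \<noteq> y}"
      define x where "x = inv_into UNIV h y"
      have hx: "h x = y" unfolding x_def using bh by (simp add: bij_is_surj surj_f_inv_f)
      have "f x \<noteq> h x" using y hx unfolding s_def x_def by auto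
      thus "y \<in> h ` {x. f x \<noteq> h x}" using hx by (metis (mono_tags, lifting) image_eqI mem_Collect_eq)
    qed
    hence "finite {y. s y \<noteq> y}" using ps(2) unfolding h_def by (meson finite_imageI finite_subset)
    hence sS: "s \<in> Sfin" using sC unfolding Sfin_def by simp
    have "s \<circ> h = f" unfolding s_def using bij_is_inj[OF bh] by (simp add: o_assoc)
    hence "f \<in> Sfin #>\<^bsub>IETh\<^esub> h" using sS unfolding r_coset_def IETh_def by force
    hence "Sfin #>\<^bsub>IETh\<^esub> h = Sfin #>\<^bsub>IETh\<^esub> f"
      using N.repr_independence[of f Sfin h] hC N.subgroup_axioms unfolding IETh_def by simp
    thus "M \<in> generate IET ((\<lambda>f. Sfin #>\<^bsub>IETh\<^esub> f) ` flips)"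
      using coset_foldr_gen[OF ps(1)] M unfolding h_def by simp
  qed
qed

end
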